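(* Let $g>0$, $\beta>0$, $\lambda\ge1$ an integer, and $0\le\mu_1\le\mu_2\le\cdots\le\mu_{2\lambda}\le1$. Then \[ -2g^2\coth(\tfrac{\beta}{2})+\frac{4g^2\cosh(\beta(1-\mu_{2\lambda}))}{\sinh\beta}+\xi_{2\lambda}(\boldsymbol{\mu}_{2\lambda},\beta)+\psi^-_{2\lambda}(\boldsymbol{\mu}_{2\lambda},\beta)\le 0, \] that is, $\Theta_{2\lambda}(g,\beta,\boldsymbol{\mu}_{2\lambda})\le 1$.
   Context: Fix $g>0$. For an integer $\lambda\ge1$, a vector $\boldsymbol{\mu}_\lambda=(\mu_1,\dots,\mu_\lambda)$ with $\mu_0:=0$, and $t>0$, define \[ \xi_\lambda(\boldsymbol{\mu}_\lambda,t)=-\frac{8g^2}{\sinh t}\sinh^2\!\big(\tfrac{t}{2}(1-\mu_\lambda)\big)(-1)^\lambda\sum_{\gamma=0}^{\lambda}(-1)^\gamma\cosh(t\mu_\gamma)-\frac{4g^2}{\sinh t}\sum_{\substack{0\le i<j\le\lambda-1\\ j-i\ \text{odd}}}\big(\cosh(t(1-\mu_{j+1}))-\cosh(t(1-\mu_j))\big)\big(\cosh(t\mu_i)-\cosh(t\mu_{i+1})\big), \] \[ \psi^-_\lambda(\boldsymbol{\mu}_\lambda,t)=\frac{4g^2}{\sinh t}\Big[\sum_{\gamma=0}^{\lambda}(-1)^\gamma\sinh\big(t(\tfrac12-\mu_\gamma)\big)\Big]^2, \] \[ \Theta_{2\lambda}(g,\beta,\boldsymbol{\mu}_{2\lambda})=\exp\Big(-2g^2\coth(\tfrac{\beta}{2})+\frac{4g^2\cosh(\beta(1-\mu_{2\lambda}))}{\sinh\beta}+\xi_{2\lambda}(\boldsymbol{\mu}_{2\lambda},\beta)+\psi^-_{2\lambda}(\boldsymbol{\mu}_{2\lambda},\beta)\Big).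 \] *)

theory Defs
  imports "HOL-Analysis.Analysis"
begin

(* The vector mu_lambda = (mu_1,...,mu_lambda) is represented by a function
   mu :: nat => real; only indices 1..lambda are used, and the convention
   mu_0 := 0 is enforced by muz. *)
definition muz :: "(nat \<Rightarrow> real) \<Rightarrow> nat \<Rightarrow> real" where
  "muz mu i = (if i = 0 then 0 else mu i)"

definition xi :: "real \<Rightarrow> nat \<Rightarrow> (nat \<Rightarrow> real) \<Rightarrow> real \<Rightarrow> real" where
  "xi g lam mu t =
     - (8 * g^2 / sinh t) * (sinh ((t/2) * (1 - muz mu lam)))^2 * (-1)^lam
         * (\<Sum>\<gamma>=0..lam. (-1)^\<gamma> * cosh (t * muz mu \<gamma>))
     - (4 * g^2 / sinh t) *
         (\<Sum>(i,j)\<in>{(i,j). i < j \<and> j \<le> lam - 1 \<and> odd (j - i)}.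
            (cosh (t * (1 - muz mu (j+1))) - cosh (t * (1 - muz mu j)))
            * (cosh (t * muz mu i) - cosh (t * muz mu (i+1))))"

definition psi_minus :: "real \<Rightarrow> nat \<Rightarrow> (nat \<Rightarrow> real) \<Rightarrow> real \<Rightarrow> real" where
  "psi_minus g lam mu t =
     (4 * g^2 / sinh t) * (\<Sum>\<gamma>=0..lam. (-1)^\<gamma> * sinh (t * (1/2 - muz mu \<gamma>)))^2"

definition Theta_exponent :: "real \<Rightarrow> real \<Rightarrow> nat \<Rightarrow> (nat \<Rightarrow> real) \<Rightarrow> real" where
  "Theta_exponent g \<beta> lam mu =
     - 2 * g^2 * (cosh (\<beta>/2) / sinh (\<beta>/2))
     + 4 * g^2 * cosh (\<beta> * (1 - muz mu (2*lam))) / sinh \<beta>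
     + xi g (2*lam) mu \<beta> + psi_minus g (2*lam) mu \<beta>"

definition Theta :: "real \<Rightarrow> real \<Rightarrow> nat \<Rightarrow> (nat \<Rightarrow> real) \<Rightarrow> real" where
  "Theta g \<beta> lam mu = exp (Theta_exponent g \<beta> lam mu)"

end

theory Submission
  imports Defs
begin


definition sg :: "nat \<Rightarrow> real" where "sg k = (-1)^k"

lemma sg_sq: "sg k * sg k = 1"
  unfolding sg_def by (simp add: power_mult_distrib[symmetric])

lemma sg_Suc: "sg (Suc k) = - sg k" unfolding sg_def by simp

definition SX :: "(nat \<Rightarrow> real) \<Rightarrow> nat \<Rightarrow> real" where
  "SX x n = (\<Sum>k=0..n. sg k * x k)"
definition SY :: "(nat \<Rightarrow> real) \<Rightarrow> nat \<Rightarrow> real" where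
  "SY x n = (\<Sum>k=0..n. sg k / x k)"

lemma SX_Suc: "SX x (Suc n) = SX x n + sg (Suc n) * x (Suc n)"
  unfolding SX_def by simp
lemma SY_Suc: "SY x (Suc n) = SY x n + sg (Suc n) / x (Suc n)"
  unfolding SY_def by simp
lemma SX_0: "x 0 = 1 \<Longrightarrow> SX x 0 = 1" unfolding SX_def sg_def by simp
lemma SY_0: "x 0 = 1 \<Longrightarrow> SY x 0 = 1" unfolding SY_def sg_def by simp

fun QG :: "(nat \<Rightarrow> real) \<Rightarrow> real \<Rightarrow> nat \<Rightarrow> real" where
  "QG x q 0 = 0"
| "QG x q (Suc n) = QG x q n + (1 + 1/q)
     + 2 * (sg (Suc n) / x (Suc n) * (SX x n - 1) + (1/q) * (sg (Suc n) * x (Suc n)) * (SY x n - 1))"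

fun W1 :: "(nat \<Rightarrow> real) \<Rightarrow> nat \<Rightarrow> real" where
  "W1 x 0 = 0"
| "W1 x (Suc n) = W1 x n + sg (Suc n) * x (Suc n) * (SY x n - 1)"

fun W2 :: "(nat \<Rightarrow> real) \<Rightarrow> nat \<Rightarrow> real" where
  "W2 x 0 = 0"
| "W2 x (Suc n) = W2 x n + sg (Suc n) / x (Suc n) * (SX x n - 1)"

lemma F1: "QG x q n = n * (1 + 1/q) + 2 * W2 x n + (2/q) * W1 x n"
  by (induction n) (simp_all add: algebra_simps add_divide_distrib diff_divide_distrib)

lemma alg2: "(s::real) * s = 1 \<Longrightarrow> y \<noteq> 0 \<Longrightarrow>
   (A + s * y - 1) * (B + s / y - 1) - (n + 1) - ((A - 1) * (B - 1) - n) = s * y * (B - 1) + s / y * (A - 1)"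
  by (simp add: field_simps)

lemma F2:
  assumes "\<And>k. x k > 0" "x 0 = 1"
  shows "W1 x n + W2 x n = (SX x n - 1) * (SY x n - 1) - n"
proof (induction n)
  case 0 then show ?case using assms by (simp add: SX_0 SY_0)
next
  case (Suc n)
  have "x (Suc n) \<noteq> 0" using assms(1)[of "Suc n"] by simp
  from alg2[OF sg_sq[of "Suc n"] this, of "SX x n" "SY x n" n]
  show ?case using Suc by (simp add: SX_Suc SY_Suc algebra_simps)
qed

lemma alg3: "(s::real) * s = 1 \<Longrightarrow> y \<noteq> 0 \<Longrightarrow>
   (B + s / y - 1) * y^2 - (A + s * y - 1) - ((B - 1) * z^2 - (A - 1)) = (B - 1) * (y^2 - z^2)"
  by (simp add: field_simps power2_eq_square)

lemma F3:
  assumes "\<And>k. x k > 0" "x 0 = 1"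
  shows "(\<Sum>k<n. (SY x k - 1) * (x (Suc k)^2 - x k^2)) = (SY x n - 1) * x n^2 - (SX x n - 1)"
proof (induction n)
  case 0 then show ?case using assms by (simp add: SX_0 SY_0)
next
  case (Suc n)
  have "x (Suc n) \<noteq> 0" using assms(1)[of "Suc n"] by simp
  from alg3[OF sg_sq[of "Suc n"] this, of "SY x n" "SX x n" "x n"]
  show ?case using Suc by (simp add: SX_Suc SY_Suc algebra_simps)
qed

lemma alg4: "(s::real) * s = 1 \<Longrightarrow> y \<noteq> 0 \<Longrightarrow>
   (B + s / y - 1)^2 * y^2 - 2 * (W + s * y * (B - 1)) - (n + 1) - ((B - 1)^2 * z^2 - 2 * W - n) = (B - 1)^2 * (y^2 - z^2)"
  by (simp add: field_simps power2_eq_square)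

lemma F4:
  assumes "\<And>k. x k > 0" "x 0 = 1"
  shows "(\<Sum>k<n. (SY x k - 1)^2 * (x (Suc k)^2 - x k^2)) = (SY x n - 1)^2 * x n^2 - 2 * W1 x n - n"
proof (induction n)
  case 0 then show ?case using assms by (simp add: SX_0 SY_0)
next
  case (Suc n)
  have "x (Suc n) \<noteq> 0" using assms(1)[of "Suc n"] by simp
  from alg4[OF sg_sq[of "Suc n"] this, of "SY x n" "W1 x n" n "x n"]
  show ?case using Suc by (simp add: SX_Suc SY_Suc algebra_simps)
qed

lemma alg5: "(s::real) * s = 1 \<Longrightarrow> y \<noteq> 0 \<Longrightarrow> z \<noteq> 0 \<Longrightarrow>
   (B + s / y - 1) - (A + s * y - 1) / y^2 - ((B - 1) - (A - 1) / z^2) = (A - 1) * (1 / z^2 - 1 / y^2)"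
  by (simp add: field_simps power2_eq_square)

lemma F5:
  assumes "\<And>k. x k > 0" "x 0 = 1"
  shows "(\<Sum>k<n. (SX x k - 1) * (1 / x k^2 - 1 / x (Suc k)^2)) = (SY x n - 1) - (SX x n - 1) / x n^2"
proof (induction n)
  case 0 then show ?case using assms by (simp add: SX_0 SY_0)
next
  case (Suc n)
  have "x (Suc n) \<noteq> 0" using assms(1)[of "Suc n"] by simp
  moreover have "x n \<noteq> 0" using assms(1)[of n] by simp
  ultimately have H: "(SY x n + sg (Suc n) / x (Suc n) - 1) - (SX x n + sg (Suc n) * x (Suc n) - 1) / x (Suc n)^2 - ((SY x n - 1) - (SX x n - 1) / x n^2) = (SX x n - 1) * (1 / x n^2 - 1 / x (Suc n)^2)"
    by (intro alg5[OF sg_sq[of "Suc n"]])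
  from H
  show ?case using Suc by (simp add: SX_Suc SY_Suc algebra_simps)
qed

lemma alg6: "(s::real) * s = 1 \<Longrightarrow> y \<noteq> 0 \<Longrightarrow> z \<noteq> 0 \<Longrightarrow>
   2 * (W + s / y * (A - 1)) + (n + 1) - (A + s * y - 1)^2 / y^2 - (2 * W + n - (A - 1)^2 / z^2) = (A - 1)^2 * (1 / z^2 - 1 / y^2)"
  by (simp add: field_simps power2_eq_square)

lemma F6:
  assumes "\<And>k. x k > 0" "x 0 = 1"
  shows "(\<Sum>k<n. (SX x k - 1)^2 * (1 / x k^2 - 1 / x (Suc k)^2)) = 2 * W2 x n + n - (SX x n - 1)^2 / x n^2"
proof (induction n)
  case 0 then show ?case using assms by (simp add: SX_0 SY_0)
next
  case (Suc n)
  have "x (Suc n) \<noteq> 0" using assms(1)[of "Suc n"] by simp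
  moreover have "x n \<noteq> 0" using assms(1)[of n] by simp
  ultimately have H: "2 * (W2 x n + sg (Suc n) / x (Suc n) * (SX x n - 1)) + (real n + 1) - (SX x n + sg (Suc n) * x (Suc n) - 1)^2 / x (Suc n)^2 - (2 * W2 x n + real n - (SX x n - 1)^2 / x n^2) = (SX x n - 1)^2 * (1 / x n^2 - 1 / x (Suc n)^2)"
    by (intro alg6[OF sg_sq[of "Suc n"]])
  from H
  show ?case using Suc by (simp add: SX_Suc SY_Suc algebra_simps)
qed



lemma algR:
  fixes y q A B W1 W2 n :: real
  assumes "y \<noteq> 0" "q \<noteq> 0" "W1 + W2 = A * B - n"
  shows "B^2 * (y^2 - 1) - 2 * (1 - 1/q) * B * (B * y^2 - A) + (1 - 1/q)^2 * (B^2 * y^2 - 2 * W1 - n)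
       + (1/q)^2 * A^2 * (1 - 1/y^2) + 2 * (1/q) * A * (1 - 1/q) * (B - A / y^2)
       + (1 - 1/q)^2 * (2 * W2 + n - A^2 / y^2) + (1/q)^2 * B^2 * (q^2 - y^2) + A^2 * (1/y^2 - (1/q)^2)
     = 2 * (1 - 1/q) * (n * (1 + 1/q) + 2 * W2 + (2/q) * W1)"
proof -
  have W1: "W1 = A * B - n - W2" using assms(3) by simp
  show ?thesis unfolding W1 using assms(1,2)
    by (simp add: field_simps power2_eq_square)
qed


lemma sum_sq_expand1:
  fixes B g :: real
  shows "(\<Sum>k<N. (B - g * f k)^2 * d k) = B^2 * (\<Sum>k<N. d k) - 2 * g * B * (\<Sum>k<N. f k * d k) + g^2 * (\<Sum>k<N. (f k)^2 * d k)"
  by (simp add: power2_eq_square algebra_simps sum.distrib sum_subtractf sum_distrib_left)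

lemma sum_sq_expand2:
  fixes C g :: real
  shows "(\<Sum>k<N. (C + g * f k)^2 * d k) = C^2 * (\<Sum>k<N. d k) + 2 * g * C * (\<Sum>k<N. f k * d k) + g^2 * (\<Sum>k<N. (f k)^2 * d k)"
  by (simp add: power2_eq_square algebra_simps sum.distrib sum_subtractf sum_distrib_left)

lemma QG_nonneg:
  assumes pos: "\<And>k. x k > 0" and x0: "x 0 = 1" and q1: "q > 1"
    and mono: "\<And>k. k < N \<Longrightarrow> x k \<le> x (Suc k)" and top: "x N \<le> q"
  shows "QG x q N \<ge> 0"
proof -
  define c where "c = 1/q"
  define B where "B = SY x N - 1"
  define A where "A = SX x N - 1"
  define R where "R = (\<Sum>k<N. (B - (1-c) * (SY x k - 1))^2 * (x (Suc k)^2 - x k^2))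
      + (\<Sum>k<N. (c * A + (1-c) * (SX x k - 1))^2 * (1 / x k^2 - 1 / x (Suc k)^2))
      + c^2 * B^2 * (q^2 - x N^2) + A^2 * (1 / x N^2 - c^2)"
  have c0: "0 < c" "c < 1" using q1 unfolding c_def by auto
  have R0: "R \<ge> 0"
  proof -
    have a: "(\<Sum>k<N. (B - (1-c) * (SY x k - 1))^2 * (x (Suc k)^2 - x k^2)) \<ge> 0"
    proof (rule sum_nonneg)
      fix k assume "k \<in> {..<N}"
      then have "x k \<le> x (Suc k)" using mono by simp
      then have "x k^2 \<le> x (Suc k)^2" using pos[of k] by (intro power_mono) auto
      then show "(B - (1-c) * (SY x k - 1))^2 * (x (Suc k)^2 - x k^2) \<ge> 0" by simp
    qed
    have b: "(\<Sum>k<N. (c * A + (1-c) * (SX x k - 1))^2 * (1 / x k^2 - 1 / x (Suc k)^2)) \<ge> 0"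
    proof (rule sum_nonneg)
      fix k assume "k \<in> {..<N}"
      then have "x k \<le> x (Suc k)" using mono by simp
      then have "x k^2 \<le> x (Suc k)^2" using pos[of k] by (intro power_mono) auto
      then have "1 / x (Suc k)^2 \<le> 1 / x k^2" using pos[of k] pos[of "Suc k"]
        by (intro divide_left_mono) auto
      then show "(c * A + (1-c) * (SX x k - 1))^2 * (1 / x k^2 - 1 / x (Suc k)^2) \<ge> 0" by simp
    qed
    have xN2: "x N^2 \<le> q^2" using top pos[of N] by (intro power_mono) auto
    have "c^2 = 1 / q^2" unfolding c_def by (simp add: power_divide)
    moreover have "1 / q^2 \<le> 1 / x N^2" using xN2 pos[of N] q1 by (intro divide_left_mono) auto
    ultimately have d: "1 / x N^2 - c^2 \<ge> 0" by simp
    have e: "q^2 - x N^2 \<ge> 0" using xN2 by simp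
    show ?thesis unfolding R_def using a b d e by (intro add_nonneg_nonneg) auto
  qed
  have tel1: "(\<Sum>k<N. x (Suc k)^2 - x k^2) = x N^2 - 1"
    using sum_lessThan_telescope[of "\<lambda>k. x k^2" N] x0 by simp
  have tel2: "(\<Sum>k<N. 1 / x k^2 - 1 / x (Suc k)^2) = 1 - 1 / x N^2"
    using sum_lessThan_telescope'[of "\<lambda>k. 1 / x k^2" N] x0 by simp
  have "R = B^2 * (x N^2 - 1) - 2 * (1 - 1/q) * B * (B * x N^2 - A) + (1 - 1/q)^2 * (B^2 * x N^2 - 2 * W1 x N - N)
       + (1/q)^2 * A^2 * (1 - 1/x N^2) + 2 * (1/q) * A * (1 - 1/q) * (B - A / x N^2)
       + (1 - 1/q)^2 * (2 * W2 x N + N - A^2 / x N^2) + (1/q)^2 * B^2 * (q^2 - x N^2) + A^2 * (1/x N^2 - (1/q)^2)"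
    unfolding R_def sum_sq_expand1[of B "1-c" "\<lambda>k. SY x k - 1" "\<lambda>k. x (Suc k)^2 - x k^2" N]
      sum_sq_expand2[of "c * A" "1-c" "\<lambda>k. SX x k - 1" "\<lambda>k. 1 / x k^2 - 1 / x (Suc k)^2" N]
    unfolding tel1 tel2 F3[of x N, OF pos x0] F4[of x N, OF pos x0] F5[of x N, OF pos x0] F6[of x N, OF pos x0]
    unfolding A_def[symmetric] B_def[symmetric] c_def
    using pos[of N] q1 by (simp add: algebra_simps power_mult_distrib, simp add: field_simps power2_eq_square)
  also have "\<dots> = 2 * (1 - 1/q) * (N * (1 + 1/q) + 2 * W2 x N + (2/q) * W1 x N)"
    by (rule algR) (use pos[of N] q1 F2[of x N, OF pos x0] in \<open>auto simp: A_def B_def\<close>)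
  also have "\<dots> = 2 * (1 - c) * QG x q N" unfolding F1 c_def ..
  finally have "R = 2 * (1 - c) * QG x q N" .
  with R0 c0 show ?thesis by (simp add: zero_le_mult_iff)
qed



definition xx :: "real \<Rightarrow> (nat \<Rightarrow> real) \<Rightarrow> nat \<Rightarrow> real" where
  "xx t mu k = exp (t * muz mu k)"
definition CC :: "real \<Rightarrow> (nat \<Rightarrow> real) \<Rightarrow> nat \<Rightarrow> real" where
  "CC t mu k = cosh (t * muz mu k)"
definition C1 :: "real \<Rightarrow> (nat \<Rightarrow> real) \<Rightarrow> nat \<Rightarrow> real" where
  "C1 t mu k = cosh (t * (1 - muz mu k))"
definition GG :: "real \<Rightarrow> (nat \<Rightarrow> real) \<Rightarrow> nat \<Rightarrow> real" where
  "GG t mu j = (\<Sum>i<j. if odd (j - i) then CC t mu i - CC t mu (i+1) else 0)"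
definition TT :: "real \<Rightarrow> (nat \<Rightarrow> real) \<Rightarrow> nat \<Rightarrow> real" where
  "TT t mu n = (\<Sum>j<n. (C1 t mu (j+1) - C1 t mu j) * GG t mu j)"
definition SS :: "real \<Rightarrow> (nat \<Rightarrow> real) \<Rightarrow> nat \<Rightarrow> real" where
  "SS t mu L = (\<Sum>\<gamma>=0..L. (-1)^\<gamma> * CC t mu \<gamma>)"
definition PP :: "real \<Rightarrow> (nat \<Rightarrow> real) \<Rightarrow> nat \<Rightarrow> real" where
  "PP t mu L = (\<Sum>\<gamma>=0..L. (-1)^\<gamma> * sinh (t * (1/2 - muz mu \<gamma>)))"
definition Ep :: "real \<Rightarrow> (nat \<Rightarrow> real) \<Rightarrow> nat \<Rightarrow> real" where
  "Ep t mu L = -(1 + cosh t)/2 + C1 t mu L - 2 * (sinh ((t/2) * (1 - muz mu L)))^2 * SS t mu L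
     - TT t mu L + (PP t mu L)^2"

lemma muz0[simp]: "muz mu 0 = 0" unfolding muz_def by simp
lemma xx_pos: "xx t mu k > 0" unfolding xx_def by simp
lemma xx0: "xx t mu 0 = 1" unfolding xx_def by simp
lemma CC0: "CC t mu 0 = 1" unfolding CC_def by simp

lemma GG_Suc: "GG t mu (Suc j) = 1 - CC t mu (Suc j) - GG t mu j"
proof -
  have "GG t mu (Suc j) = (\<Sum>i<j. if odd (Suc j - i) then CC t mu i - CC t mu (i+1) else 0)
        + (CC t mu j - CC t mu (Suc j))"
    unfolding GG_def by simp
  also have "(\<Sum>i<j. if odd (Suc j - i) then CC t mu i - CC t mu (i+1) else 0)
       = (\<Sum>i<j. (CC t mu i - CC t mu (Suc i)) - (if odd (j - i) then CC t mu i - CC t mu (i+1) else 0))"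
    by (rule sum.cong) (auto simp: Suc_diff_le)
  also have "\<dots> = (\<Sum>i<j. CC t mu i - CC t mu (Suc i)) - GG t mu j"
    unfolding GG_def by (simp add: sum_subtractf)
  also have "(\<Sum>i<j. CC t mu i - CC t mu (Suc i)) = CC t mu 0 - CC t mu j"
    by (rule sum_lessThan_telescope')
  finally show ?thesis by (simp add: CC0)
qed

lemma SS_Suc: "SS t mu (Suc n) = SS t mu n + (-1)^(Suc n) * CC t mu (Suc n)"
  unfolding SS_def by simp

lemma GG_even: "GG t mu (2*n) = 1 - SS t mu (2*n)"
proof (induction n)
  case 0 then show ?case by (simp add: GG_def SS_def CC0)
next
  case (Suc n)
  have e: "2 * Suc n = Suc (Suc (2*n))" by simp
  show ?case unfolding e GG_Suc SS_Suc using Suc by simp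
qed

lemma TT_Suc: "TT t mu (Suc n) = TT t mu n + (C1 t mu (Suc n) - C1 t mu n) * GG t mu n"
  unfolding TT_def by simp

lemma CC_x: "CC t mu k = (xx t mu k + 1 / xx t mu k)/2"
  unfolding CC_def xx_def cosh_field_def by (simp add: exp_minus field_simps)

lemma C1_x: "C1 t mu k = (exp t / xx t mu k + xx t mu k / exp t)/2"
proof -
  have "exp (t * (1 - muz mu k)) = exp t / xx t mu k"
    unfolding xx_def by (simp add: right_diff_distrib exp_diff)
  moreover have "exp (- (t * (1 - muz mu k))) = xx t mu k / exp t"
    unfolding xx_def by (simp add: right_diff_distrib exp_diff)
  ultimately show ?thesis unfolding C1_def cosh_field_def by simp
qed

lemma sinh_half_x: "sinh (t * (1/2 - muz mu k)) = (exp (t/2) / xx t mu k - xx t mu k / exp (t/2))/2"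
proof -
  have "exp (t * (1/2 - muz mu k)) = exp (t/2) / xx t mu k"
    unfolding xx_def by (simp add: right_diff_distrib exp_diff)
  moreover have "exp (- (t * (1/2 - muz mu k))) = xx t mu k / exp (t/2)"
    unfolding xx_def by (simp add: right_diff_distrib exp_diff)
  ultimately show ?thesis unfolding sinh_field_def by simp
qed

lemma sh2: "(sinh ((t/2) * (1 - muz mu k)))^2 = (C1 t mu k - 1)/2"
proof -
  have "cosh (2 * ((t/2) * (1 - muz mu k))) = 2 * (sinh ((t/2) * (1 - muz mu k)))^2 + 1"
    using cosh_double[of "(t/2) * (1 - muz mu k)"] cosh_square_eq[of "(t/2) * (1 - muz mu k)"] by simp
  moreover have "2 * ((t/2) * (1 - muz mu k)) = t * (1 - muz mu k)" by simp
  ultimately show ?thesis unfolding C1_def by simp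
qed

lemma cosh_x: "cosh (t::real) = (exp t + 1 / exp t)/2"
  unfolding cosh_field_def by (simp add: exp_minus field_simps)

lemma SS_x: "SS t mu L = (SX (xx t mu) L + SY (xx t mu) L)/2"
proof -
  have "SS t mu L = (\<Sum>\<gamma>=0..L. (sg \<gamma> * xx t mu \<gamma> + sg \<gamma> / xx t mu \<gamma>)/2)"
    unfolding SS_def by (rule sum.cong) (simp_all add: CC_x sg_def field_simps)
  also have "\<dots> = (SX (xx t mu) L + SY (xx t mu) L)/2"
    unfolding SX_def SY_def by (simp add: sum.distrib flip: sum_divide_distrib)
  finally show ?thesis .
qed

lemma PP_x: "PP t mu L = (exp (t/2) * SY (xx t mu) L - SX (xx t mu) L / exp (t/2))/2"
proof -
  have "PP t mu L = (\<Sum>\<gamma>=0..L. (exp (t/2) * (sg \<gamma> / xx t mu \<gamma>) - (sg \<gamma> * xx t mu \<gamma>) / exp (t/2))/2)"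
    unfolding PP_def sinh_half_x by (rule sum.cong) (simp_all add: sg_def field_simps)
  also have "\<dots> = (exp (t/2) * SY (xx t mu) L - SX (xx t mu) L / exp (t/2))/2"
    unfolding SX_def SY_def by (simp add: sum_subtractf sum_distrib_left flip: sum_divide_distrib)
  finally show ?thesis .
qed

definition Efun :: "real \<Rightarrow> real \<Rightarrow> real \<Rightarrow> real \<Rightarrow> real \<Rightarrow> real \<Rightarrow> real" where
  "Efun q r w X Y T = -(1+(q+1/q)/2)/2 + (q/w + w/q)/2 - ((q/w + w/q)/2 - 1)*(X+Y)/2 - T + ((r*Y - X/r)/2)^2"

lemma Ep_form: "Ep t mu L = Efun (exp t) (exp (t/2)) (xx t mu L) (SX (xx t mu) L) (SY (xx t mu) L) (TT t mu L)"
  unfolding Ep_def Efun_def sh2 SS_x PP_x C1_x cosh_x using xx_pos[of t mu L] by (simp add: field_simps)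



lemma step_alg:
  fixes w u v X Y q r T :: real
  assumes "r > 0" "q = r^2" "w > 0" "u > 0" "v > 0"
  shows "Efun q r v (X - u + v) (Y - 1/u + 1/v)
           (T + ((q/u + u/q)/2 - (q/w + w/q)/2) * (1 - (X+Y)/2)
              + ((q/v + v/q)/2 - (q/u + u/q)/2) * (1 - (u + 1/u)/2 - (1 - (X+Y)/2)))
       = Efun q r w X Y T
         + (-(q+1)/4) * (2*(1+1/q) + 2*(-(X-1)/u - u * (Y-1)/q) + 2*((X-u-1)/v + v * (Y-1/u-1)/q))"
  using assms unfolding Efun_def
  by (simp add: field_simps power2_eq_square)

lemma sg_even: "sg (2*n) = 1" and sg_odd: "sg (Suc (2*n)) = -1"
  unfolding sg_def by simp_all

lemma main_identity: "Ep t mu (2*n) = -(exp t + 1)/4 * QG (xx t mu) (exp t) (2*n)"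
proof (induction n)
  case 0
  have r: "exp t = exp (t/2)^2" by (simp add: power2_eq_square flip: exp_add)
  have "exp (t/2) > 0" by simp
  then show ?case unfolding Ep_form
    by (simp add: xx0 SX_0 SY_0 TT_def Efun_def r) (simp add: field_simps power2_eq_square)
next
  case (Suc n)
  define L where "L = 2*n"
  have e: "2 * Suc n = Suc (Suc L)" unfolding L_def by simp
  define q where "q = exp t"
  define r where "r = exp (t/2)"
  define w where "w = xx t mu L"
  define u where "u = xx t mu (Suc L)"
  define v where "v = xx t mu (Suc (Suc L))"
  define X where "X = SX (xx t mu) L"
  define Y where "Y = SY (xx t mu) L"
  define T where "T = TT t mu L"
  have qr: "q = r^2" unfolding q_def r_def by (simp add: power2_eq_square flip: exp_add)
  have pos: "r > 0" "w > 0" "u > 0" "v > 0" unfolding r_def w_def u_def v_def by (simp_all add: xx_pos)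
  have sg1: "sg (Suc L) = -1" and sg2: "sg (Suc (Suc L)) = 1"
    unfolding L_def sg_def by simp_all
  have GL: "GG t mu L = 1 - (X+Y)/2" unfolding L_def GG_even SS_x X_def Y_def L_def ..
  have TT2: "TT t mu (Suc (Suc L)) = T + ((q/u + u/q)/2 - (q/w + w/q)/2) * (1 - (X+Y)/2)
              + ((q/v + v/q)/2 - (q/u + u/q)/2) * (1 - (u + 1/u)/2 - (1 - (X+Y)/2))"
    unfolding TT_Suc GG_Suc GL T_def C1_x CC_x q_def u_def v_def w_def by simp
  have SX2: "SX (xx t mu) (Suc (Suc L)) = X - u + v"
    unfolding SX_Suc sg1 sg2 X_def u_def v_def by simp
  have SY2: "SY (xx t mu) (Suc (Suc L)) = Y - 1/u + 1/v"
    unfolding SY_Suc sg1 sg2 Y_def u_def v_def by simp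
  have QG2: "QG (xx t mu) q (Suc (Suc L)) = QG (xx t mu) q L
      + (2*(1+1/q) + 2*(-(X-1)/u - u * (Y-1)/q) + 2*((X-u-1)/v + v * (Y-1/u-1)/q))"
    using pos unfolding QG.simps SX_Suc SY_Suc sg1 sg2
    by (simp add: X_def Y_def u_def v_def field_simps)
  have IH: "Efun q r w X Y T = -(q + 1)/4 * QG (xx t mu) q L"
    using Suc.IH unfolding Ep_form L_def q_def r_def w_def X_def Y_def T_def by simp
  have "Ep t mu (2 * Suc n) = Efun q r v (X - u + v) (Y - 1/u + 1/v) (TT t mu (Suc (Suc L)))"
    unfolding e Ep_form SX2 SY2 q_def r_def v_def ..
  also have "\<dots> = Efun q r w X Y T
         + (-(q+1)/4) * (2*(1+1/q) + 2*(-(X-1)/u - u * (Y-1)/q) + 2*((X-u-1)/v + v * (Y-1/u-1)/q))"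
    unfolding TT2 by (rule step_alg[OF pos(1) qr pos(2-4)])
  also have "\<dots> = -(q + 1)/4 * QG (xx t mu) q (Suc (Suc L))"
    unfolding IH QG2 by (simp add: algebra_simps)
  finally show ?case unfolding e q_def .
qed



lemma pairsum_aux:
  fixes L :: nat and f :: "nat \<Rightarrow> nat \<Rightarrow> real" shows "(\<Sum>(i,j)\<in>{(i,j). i < j \<and> j < L \<and> odd (j - i)}. f i j) = (\<Sum>j<L. \<Sum>i<j. if odd (j - i) then f i j else (0::real))"
proof (induction L)
  case 0 then show ?case by simp
next
  case (Suc L)
  have eq: "{(i,j). i < j \<and> j < Suc L \<and> odd (j - i)} =
      {(i,j). i < j \<and> j < L \<and> odd (j - i)} \<union> (\<lambda>i. (i, L)) ` {i \<in> {..<L}. odd (L - i)}"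
  proof (intro set_eqI iffI)
    fix p assume "p \<in> {(i,j). i < j \<and> j < Suc L \<and> odd (j - i)}"
    then obtain i j where p: "p = (i,j)" "i<j" "j<Suc L" "odd (j-i)" by auto
    show "p \<in> {(i,j). i < j \<and> j < L \<and> odd (j - i)} \<union> (\<lambda>i. (i, L)) ` {i \<in> {..<L}. odd (L - i)}"
    proof (cases "j = L")
      case True then show ?thesis using p by auto
    next
      case False then show ?thesis using p by auto
    qed
  next
    fix p assume "p \<in> {(i,j). i < j \<and> j < L \<and> odd (j - i)} \<union> (\<lambda>i. (i, L)) ` {i \<in> {..<L}. odd (L - i)}"
    then show "p \<in> {(i,j). i < j \<and> j < Suc L \<and> odd (j - i)}" by auto
  qed
  have fin: "finite {(i,j). i < j \<and> j < L \<and> odd (j - i)}"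
    by (rule finite_subset[of _ "{..<L} \<times> {..<L}"]) auto
  have "(\<Sum>(i,j)\<in>{(i,j). i < j \<and> j < Suc L \<and> odd (j - i)}. f i j)
      = (\<Sum>(i,j)\<in>{(i,j). i < j \<and> j < L \<and> odd (j - i)}. f i j)
        + (\<Sum>(i,j)\<in>(\<lambda>i. (i, L)) ` {i \<in> {..<L}. odd (L - i)}. f i j)"
    unfolding eq by (rule sum.union_disjoint) (use fin in auto)
  also have "(\<Sum>(i,j)\<in>(\<lambda>i. (i, L)) ` {i \<in> {..<L}. odd (L - i)}. f i j) = (\<Sum>i\<in>{i \<in> {..<L}. odd (L - i)}. f i L)"
    by (subst sum.reindex) (auto simp: inj_on_def)
  also have "\<dots> = (\<Sum>i<L. if odd (L - i) then f i L else 0)"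
    by (rule sum.inter_filter) simp
  finally show ?case using Suc by simp
qed

lemma pairsum:
  fixes L :: nat and f :: "nat \<Rightarrow> nat \<Rightarrow> real" shows "(\<Sum>(i,j)\<in>{(i,j). i < j \<and> j \<le> L - 1 \<and> odd (j - i)}. f i j) = (\<Sum>j<L. \<Sum>i<j. if odd (j - i) then f i j else (0::real))"
proof -
  have "{(i,j). i < j \<and> j \<le> L - 1 \<and> odd (j - i)} = {(i,j). i < j \<and> j < L \<and> odd (j - i)}"
  proof (intro set_eqI iffI)
    fix p assume "p \<in> {(i,j). i < j \<and> j \<le> L - 1 \<and> odd (j - i)}"
    then obtain i j where p: "p = (i,j)" "i<j" "j \<le> L - 1" "odd (j-i)" by auto
    have "j < L" using p(2,3) by arith
    then show "p \<in> {(i,j). i < j \<and> j < L \<and> odd (j - i)}" using p by auto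
  next
    fix p assume "p \<in> {(i,j). i < j \<and> j < L \<and> odd (j - i)}"
    then obtain i j where p: "p = (i,j)" "i<j" "j < L" "odd (j-i)" by auto
    have "j \<le> L - 1" using p(2,3) by arith
    then show "p \<in> {(i,j). i < j \<and> j \<le> L - 1 \<and> odd (j - i)}" using p by auto
  qed
  then show ?thesis using pairsum_aux by simp
qed

lemma TT_pairs: "(\<Sum>(i,j)\<in>{(i,j). i < j \<and> j \<le> L - 1 \<and> odd (j - i)}.
            (cosh (t * (1 - muz mu (j+1))) - cosh (t * (1 - muz mu j)))
            * (cosh (t * muz mu i) - cosh (t * muz mu (i+1)))) = TT t mu L"
  unfolding pairsum TT_def GG_def sum_distrib_left C1_def CC_def
  by (rule sum.cong) (auto intro!: sum.cong)

lemma coth_half: "(t::real) \<noteq> 0 \<Longrightarrow> cosh (t/2) / sinh (t/2) = (1 + cosh t) / sinh t"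
proof -
  assume t: "t \<noteq> 0"
  have s: "sinh t = 2 * sinh (t/2) * cosh (t/2)" using sinh_double[of "t/2"] by simp
  have c: "cosh t = 2 * (cosh (t/2))^2 - 1" using cosh_double_cosh[of "t/2"] by simp
  have "sinh (t/2) \<noteq> 0" using t by simp
  then show ?thesis unfolding s c by (simp add: field_simps power2_eq_square)
qed

lemma alg_theta:
  fixes s g c a h S T P :: real
  assumes "s \<noteq> 0"
  shows "-2*g^2*((1+c)/s) + 4*g^2*a/s + (-(8*g^2/s)*h*1*S - (4*g^2/s)*T) + (4*g^2/s)*P^2
     = (4*g^2/s)*(-(1+c)/2 + a - 2*h*S - T + P^2)"
  using assms by (simp add: field_simps)

lemma Theta_exp_eq:
  assumes "t > 0"
  shows "Theta_exponent g t lam mu = (4 * g^2 / sinh t) * Ep t mu (2*lam)"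
proof -
  have st: "sinh t \<noteq> 0" using assms by simp
  have t0: "t \<noteq> 0" using assms by simp
  have xi: "xi g (2*lam) mu t = -(8*g^2/sinh t) * (sinh((t/2)*(1 - muz mu (2*lam))))^2 * 1 * SS t mu (2*lam)
        - (4*g^2/sinh t) * TT t mu (2*lam)"
    unfolding xi_def TT_pairs SS_def CC_def by simp
  have psi: "psi_minus g (2*lam) mu t = (4*g^2/sinh t) * (PP t mu (2*lam))^2"
    unfolding psi_minus_def PP_def ..
  have "Theta_exponent g t lam mu = -2*g^2*((1 + cosh t)/sinh t) + 4*g^2*C1 t mu (2*lam)/sinh t
      + (-(8*g^2/sinh t) * (sinh((t/2)*(1 - muz mu (2*lam))))^2 * 1 * SS t mu (2*lam)
        - (4*g^2/sinh t) * TT t mu (2*lam)) + (4*g^2/sinh t) * (PP t mu (2*lam))^2"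
    unfolding Theta_exponent_def xi psi coth_half[OF t0, symmetric] C1_def by simp
  also have "\<dots> = (4 * g^2 / sinh t) * Ep t mu (2*lam)"
    unfolding Ep_def by (rule alg_theta[OF st])
  finally show ?thesis .
qed


lemma neg_aux: fixes b :: real shows "-(exp b + 1)/4 \<le> 0"
proof -
  have "0 < exp b + 1" by (rule add_pos_pos) (rule exp_gt_zero, rule zero_less_one)
  then have "0 \<le> (exp b + 1)/4" by (intro divide_nonneg_pos) auto
  then have "- ((exp b + 1)/4) \<le> 0" by (rule iffD2[OF neg_le_0_iff_le])
  then show ?thesis by (simp only: minus_divide_left)
qed

theorem mainTheorem2:
  fixes g \<beta> :: real and lam :: nat and mu :: "nat \<Rightarrow> real"
  assumes "g > 0" and "\<beta> > 0" and "lam \<ge> 1"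
    and "0 \<le> mu 1"
    and "\<And>i. 1 \<le> i \<Longrightarrow> i < 2 * lam \<Longrightarrow> mu i \<le> mu (i + 1)"
    and "mu (2 * lam) \<le> 1"
  shows "Theta_exponent g \<beta> lam mu \<le> 0 \<and> Theta g \<beta> lam mu \<le> 1"
proof -
  have mono: "xx \<beta> mu k \<le> xx \<beta> mu (Suc k)" if k: "k < 2 * lam" for k
  proof -
    have "muz mu k \<le> muz mu (Suc k)"
    proof (cases "k = 0")
      case True then show ?thesis using assms(4) by (simp add: muz_def)
    next
      case False then show ?thesis using assms(5)[of k] k by (simp add: muz_def)
    qed
    then have "\<beta> * muz mu k \<le> \<beta> * muz mu (Suc k)" using assms(2) by (simp add: mult_left_mono)
    then show ?thesis unfolding xx_def by simp
  qed
  have top: "xx \<beta> mu (2 * lam) \<le> exp \<beta>"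
  proof -
    have "muz mu (2 * lam) \<le> 1" using assms(3,6) by (simp add: muz_def)
    then have "\<beta> * muz mu (2 * lam) \<le> \<beta> * 1" using assms(2) by (intro mult_left_mono) auto
    then show ?thesis unfolding xx_def by simp
  qed
  have q1: "exp \<beta> > 1" using assms(2) by simp
  have Q: "QG (xx \<beta> mu) (exp \<beta>) (2 * lam) \<ge> 0"
    by (rule QG_nonneg[OF xx_pos xx0 q1 mono top])
  have K: "4 * g^2 / sinh \<beta> > 0" using assms(1,2) by simp
  have neg: "-(exp \<beta> + 1)/4 \<le> 0" by (rule neg_aux)
  have E: "Ep \<beta> mu (2 * lam) \<le> 0"
    unfolding main_identity using neg Q by (rule mult_nonpos_nonneg)
  have T: "Theta_exponent g \<beta> lam mu \<le> 0"
    unfolding Theta_exp_eq[OF assms(2)] using less_imp_le[OF K] E by (rule mult_nonneg_nonpos)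
  then have "Theta g \<beta> lam mu \<le> 1" unfolding Theta_def by simp
  with T show ?thesis by simp
qed

end
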